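(* (Homomorphism Theorem) Let $\mathbf L_1=(L_1,\vee,\wedge)$ and $\mathbf L_2=(L_2,\vee,\wedge)$ be partial lattices and $h$ a closed homomorphism from $\mathbf L_1$ to $\mathbf L_2$. Then $\ker h\in\operatorname{Con}\mathbf L_1$. If, in addition, $[0_{\mathbf L_1^*}]\Theta(\ker h)=\{0_{\mathbf L_1^*}\}$ provided $0_{\mathbf L_1^*}\in L_1^*$, and $[1_{\mathbf L_1^*}]\Theta(\ker h)=\{1_{\mathbf L_1^*}\}$ provided $1_{\mathbf L_1^*}\in L_1^*$, then $(h(L_1),\vee,\wedge)$, with partial operations as in $\mathbf L_2$ (i.e. $h(a)\vee h(b)$ is defined iff it is defined in $\mathbf L_2$, with the same value, and likewise for $\wedge$), is a partial lattice isomorphic to $\mathbf L_1/(\ker h)$, via $h(x)\mapsto[x]\ker h$.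
   Context: A partial lattice is a set $L$ with two partial binary operations $\vee,\wedge$ satisfying strong idempotency, commutativity and associativity (for every assignment, one side is defined iff the other is, and then they are equal) and the duality conditions: if $a\vee b$ is defined and equals $a$ then $a\wedge b$ is defined and equals $b$, and dually. Its induced order is $x\leq y$ iff $x\vee y$ is defined and equals $y$. The two-point extension $\mathbf L^*=(L^*,\leq^* )$, with new elements $0_{\mathbf L^*},1_{\mathbf L^*}\notin L$: $L^*$ is $L$ together with a new top element $1_{\mathbf L^*}$ if $\vee$ is not everywhere defined and a new bottom element $0_{\mathbf L^*}$ if $\wedge$ is not everywhere defined; $\leq^*$ extends $\leq$ by putting the new bottom below and the new top above all elements; it is a lattice with operations $\vee^*=\sup_{\leq^*}$, $\wedge^*=\inf_{\leq^*}$. A congruence on $\mathbf L$ is an equivalence relation $E$ on $L$ with $\Theta(E)\cap L^2=E$, where $\Theta(E)$ is the lattice congruence on $\mathbf L^*$ generated by $E$; $\operatorname{Con}\mathbf L$ is the set of these. For $E\in\operatorname{Con}\mathbf L$, $\mathbf L/E=(L/E,\vee,\wedge)$ with $[x]E\vee[y]E:=[x\vee^*y]\Theta(E)\cap L$ if this set is non-empty, undefined otherwise, and dually for $\wedge$. A homomorphism of partial algebras is a map $h$ such that whenever $f(a_1,\dots,a_n)$ is defined, $f(h(a_1),\dots,h(a_n))$ is defined and equals $h(f(a_1,\dots,a_n))$; it is closed if additionally definedness of $f(h(a_1),\dots,h(a_n))$ implies definedness of $f(a_1,\dots,a_n)$. An isomorphism is a bijective closed homomorphism. $\ker h=\{(x,y):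 h(x)=h(y)\}$. *)

theory Defs
  imports Main
begin

(* A partial binary operation on a carrier L is modelled as  'a => 'a => 'a option ;
   None = undefined.  Only arguments from L matter. *)

definition partial_lattice :: "'a set \<Rightarrow> ('a \<Rightarrow> 'a \<Rightarrow> 'a option) \<Rightarrow> ('a \<Rightarrow> 'a \<Rightarrow> 'a option) \<Rightarrow> bool" where
  "partial_lattice L j m \<longleftrightarrow>
     (\<forall>a\<in>L. \<forall>b\<in>L. \<forall>c. (j a b = Some c \<longrightarrow> c \<in> L) \<and> (m a b = Some c \<longrightarrow> c \<in> L)) \<and>
     (\<forall>a\<in>L. j a a = Some a \<and> m a a = Some a) \<and>
     (\<forall>a\<in>L. \<forall>b\<in>L. j a b = j b a \<and> m a b = m b a) \<and>
     (\<forall>a\<in>L. \<forall>b\<in>L. \<forall>c\<in>L.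
        Option.bind (j a b) (\<lambda>d. j d c) = Option.bind (j b c) (\<lambda>d. j a d) \<and>
        Option.bind (m a b) (\<lambda>d. m d c) = Option.bind (m b c) (\<lambda>d. m a d)) \<and>
     (\<forall>a\<in>L. \<forall>b\<in>L. (j a b = Some a \<longrightarrow> m a b = Some b) \<and> (m a b = Some a \<longrightarrow> j a b = Some b))"

datatype 'a ext = Elem 'a | Bot | Top

definition op_total :: "'a set \<Rightarrow> ('a \<Rightarrow> 'a \<Rightarrow> 'a option) \<Rightarrow> bool" where
  "op_total L f \<longleftrightarrow> (\<forall>a\<in>L. \<forall>b\<in>L. f a b \<noteq> None)"

definition ext_carrier :: "'a set \<Rightarrow> ('a \<Rightarrow> 'a \<Rightarrow> 'a option) \<Rightarrow> ('a \<Rightarrow> 'a \<Rightarrow> 'a option) \<Rightarrow> 'a ext set" where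
  "ext_carrier L j m = Elem ` L \<union> (if op_total L j then {} else {Top})
                                  \<union> (if op_total L m then {} else {Bot})"

fun ext_le :: "('a \<Rightarrow> 'a \<Rightarrow> 'a option) \<Rightarrow> 'a ext \<Rightarrow> 'a ext \<Rightarrow> bool" where
  "ext_le j Bot y = True"
| "ext_le j x Top = True"
| "ext_le j (Elem a) (Elem b) = (j a b = Some b)"
| "ext_le j _ _ = False"

definition ext_sup :: "'a set \<Rightarrow> ('a \<Rightarrow> 'a \<Rightarrow> 'a option) \<Rightarrow> ('a \<Rightarrow> 'a \<Rightarrow> 'a option) \<Rightarrow> 'a ext \<Rightarrow> 'a ext \<Rightarrow> 'a ext" where
  "ext_sup L j m x y = (THE z. z \<in> ext_carrier L j m \<and> ext_le j x z \<and> ext_le j y z \<and>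
      (\<forall>w\<in>ext_carrier L j m. ext_le j x w \<and> ext_le j y w \<longrightarrow> ext_le j z w))"

definition ext_inf :: "'a set \<Rightarrow> ('a \<Rightarrow> 'a \<Rightarrow> 'a option) \<Rightarrow> ('a \<Rightarrow> 'a \<Rightarrow> 'a option) \<Rightarrow> 'a ext \<Rightarrow> 'a ext \<Rightarrow> 'a ext" where
  "ext_inf L j m x y = (THE z. z \<in> ext_carrier L j m \<and> ext_le j z x \<and> ext_le j z y \<and>
      (\<forall>w\<in>ext_carrier L j m. ext_le j w x \<and> ext_le j w y \<longrightarrow> ext_le j w z))"

definition ext_lattice_cong :: "'a set \<Rightarrow> ('a \<Rightarrow> 'a \<Rightarrow> 'a option) \<Rightarrow> ('a \<Rightarrow> 'a \<Rightarrow> 'a option) \<Rightarrow> 'a ext rel \<Rightarrow> bool" where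
  "ext_lattice_cong L j m \<theta> \<longleftrightarrow> equiv (ext_carrier L j m) \<theta> \<and>
     (\<forall>a b c d. (a, b) \<in> \<theta> \<and> (c, d) \<in> \<theta> \<longrightarrow>
        (ext_sup L j m a c, ext_sup L j m b d) \<in> \<theta> \<and> (ext_inf L j m a c, ext_inf L j m b d) \<in> \<theta>)"

definition lift_rel :: "'a rel \<Rightarrow> 'a ext rel" where
  "lift_rel E = {(Elem x, Elem y) | x y. (x, y) \<in> E}"

definition Theta :: "'a set \<Rightarrow> ('a \<Rightarrow> 'a \<Rightarrow> 'a option) \<Rightarrow> ('a \<Rightarrow> 'a \<Rightarrow> 'a option) \<Rightarrow> 'a rel \<Rightarrow> 'a ext rel" where
  "Theta L j m E = \<Inter>{\<theta>. ext_lattice_cong L j m \<theta> \<and> lift_rel E \<subseteq> \<theta>}"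

definition Con :: "'a set \<Rightarrow> ('a \<Rightarrow> 'a \<Rightarrow> 'a option) \<Rightarrow> ('a \<Rightarrow> 'a \<Rightarrow> 'a option) \<Rightarrow> 'a rel set" where
  "Con L j m = {E. equiv L E \<and> {(x, y). (Elem x, Elem y) \<in> Theta L j m E} = E}"

definition quot_join :: "'a set \<Rightarrow> ('a \<Rightarrow> 'a \<Rightarrow> 'a option) \<Rightarrow> ('a \<Rightarrow> 'a \<Rightarrow> 'a option) \<Rightarrow> 'a rel \<Rightarrow> 'a set \<Rightarrow> 'a set \<Rightarrow> 'a set option" where
  "quot_join L j m E A B =
     (let x = (SOME x. x \<in> A); y = (SOME y. y \<in> B);
          S = {z \<in> L. (Elem z, ext_sup L j m (Elem x) (Elem y)) \<in> Theta L j m E}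
      in if S = {} then None else Some S)"

definition quot_meet :: "'a set \<Rightarrow> ('a \<Rightarrow> 'a \<Rightarrow> 'a option) \<Rightarrow> ('a \<Rightarrow> 'a \<Rightarrow> 'a option) \<Rightarrow> 'a rel \<Rightarrow> 'a set \<Rightarrow> 'a set \<Rightarrow> 'a set option" where
  "quot_meet L j m E A B =
     (let x = (SOME x. x \<in> A); y = (SOME y. y \<in> B);
          S = {z \<in> L. (Elem z, ext_inf L j m (Elem x) (Elem y)) \<in> Theta L j m E}
      in if S = {} then None else Some S)"

definition phom :: "'a set \<Rightarrow> ('a \<Rightarrow> 'a \<Rightarrow> 'a option) \<Rightarrow> ('a \<Rightarrow> 'a \<Rightarrow> 'a option) \<Rightarrow>
                    'b set \<Rightarrow> ('b \<Rightarrow> 'b \<Rightarrow> 'b option) \<Rightarrow> ('b \<Rightarrow> 'b \<Rightarrow> 'b option) \<Rightarrow> ('a \<Rightarrow> 'b) \<Rightarrow> bool" where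
  "phom L1 j1 m1 L2 j2 m2 h \<longleftrightarrow> (\<forall>a\<in>L1. h a \<in> L2) \<and>
     (\<forall>a\<in>L1. \<forall>b\<in>L1. \<forall>c. (j1 a b = Some c \<longrightarrow> j2 (h a) (h b) = Some (h c)) \<and>
                         (m1 a b = Some c \<longrightarrow> m2 (h a) (h b) = Some (h c)))"

definition closed_phom :: "'a set \<Rightarrow> ('a \<Rightarrow> 'a \<Rightarrow> 'a option) \<Rightarrow> ('a \<Rightarrow> 'a \<Rightarrow> 'a option) \<Rightarrow>
                    'b set \<Rightarrow> ('b \<Rightarrow> 'b \<Rightarrow> 'b option) \<Rightarrow> ('b \<Rightarrow> 'b \<Rightarrow> 'b option) \<Rightarrow> ('a \<Rightarrow> 'b) \<Rightarrow> bool" where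
  "closed_phom L1 j1 m1 L2 j2 m2 h \<longleftrightarrow> phom L1 j1 m1 L2 j2 m2 h \<and>
     (\<forall>a\<in>L1. \<forall>b\<in>L1. (j2 (h a) (h b) \<noteq> None \<longrightarrow> j1 a b \<noteq> None) \<and>
                      (m2 (h a) (h b) \<noteq> None \<longrightarrow> m1 a b \<noteq> None))"

definition piso :: "'a set \<Rightarrow> ('a \<Rightarrow> 'a \<Rightarrow> 'a option) \<Rightarrow> ('a \<Rightarrow> 'a \<Rightarrow> 'a option) \<Rightarrow>
                    'b set \<Rightarrow> ('b \<Rightarrow> 'b \<Rightarrow> 'b option) \<Rightarrow> ('b \<Rightarrow> 'b \<Rightarrow> 'b option) \<Rightarrow> ('a \<Rightarrow> 'b) \<Rightarrow> bool" where
  "piso L1 j1 m1 L2 j2 m2 h \<longleftrightarrow> closed_phom L1 j1 m1 L2 j2 m2 h \<and> bij_betw h L1 L2"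

definition ker :: "'a set \<Rightarrow> ('a \<Rightarrow> 'b) \<Rightarrow> 'a rel" where
  "ker L h = {(x, y). x \<in> L \<and> y \<in> L \<and> h x = h y}"

end

theory Submission
  imports Defs
begin


lemma pl_closed_j: "partial_lattice L j m \<Longrightarrow> a\<in>L \<Longrightarrow> b\<in>L \<Longrightarrow> j a b = Some c \<Longrightarrow> c\<in>L"
  unfolding partial_lattice_def by blast
lemma pl_closed_m: "partial_lattice L j m \<Longrightarrow> a\<in>L \<Longrightarrow> b\<in>L \<Longrightarrow> m a b = Some c \<Longrightarrow> c\<in>L"
  unfolding partial_lattice_def by blast
lemma pl_idem: "partial_lattice L j m \<Longrightarrow> a\<in>L \<Longrightarrow> j a a = Some a \<and> m a a = Some a"
  unfolding partial_lattice_def by blast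
lemma pl_comm: "partial_lattice L j m \<Longrightarrow> a\<in>L \<Longrightarrow> b\<in>L \<Longrightarrow> j a b = j b a \<and> m a b = m b a"
  unfolding partial_lattice_def by blast
lemma pl_assoc: assumes "partial_lattice L j m" shows "\<forall>a\<in>L. \<forall>b\<in>L. \<forall>c\<in>L.
        Option.bind (j a b) (\<lambda>d. j d c) = Option.bind (j b c) (\<lambda>d. j a d) \<and>
        Option.bind (m a b) (\<lambda>d. m d c) = Option.bind (m b c) (\<lambda>d. m a d)"
  using assms unfolding partial_lattice_def by (elim conjE) assumption
lemma pl_assoc_j: "partial_lattice L j m \<Longrightarrow> a\<in>L \<Longrightarrow> b\<in>L \<Longrightarrow> c\<in>L \<Longrightarrow>
   Option.bind (j a b) (\<lambda>d. j d c) = Option.bind (j b c) (\<lambda>d. j a d)"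
  by (drule pl_assoc) (drule bspec, assumption, drule bspec, assumption, drule bspec, assumption, erule conjunct1)
lemma pl_assoc_m: "partial_lattice L j m \<Longrightarrow> a\<in>L \<Longrightarrow> b\<in>L \<Longrightarrow> c\<in>L \<Longrightarrow>
   Option.bind (m a b) (\<lambda>d. m d c) = Option.bind (m b c) (\<lambda>d. m a d)"
  by (drule pl_assoc) (drule bspec, assumption, drule bspec, assumption, drule bspec, assumption, erule conjunct2)
lemma pl_dual0: assumes "partial_lattice L j m" shows "\<forall>a\<in>L. \<forall>b\<in>L. (j a b = Some a \<longrightarrow> m a b = Some b) \<and> (m a b = Some a \<longrightarrow> j a b = Some b)"
  using assms unfolding partial_lattice_def by (elim conjE) assumption
lemma pl_dual: "partial_lattice L j m \<Longrightarrow> a\<in>L \<Longrightarrow> b\<in>L \<Longrightarrow> (j a b = Some a \<longrightarrow> m a b = Some b) \<and> (m a b = Some a \<longrightarrow> j a b = Some b)"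
  by (drule pl_dual0) (drule bspec, assumption, drule bspec, assumption, assumption)

lemma le_iff_m: assumes "partial_lattice L j m" "a\<in>L" "b\<in>L"
  shows "m a b = Some a \<longleftrightarrow> j a b = Some b"
proof
  assume "m a b = Some a" then show "j a b = Some b" using pl_dual[OF assms] by blast
next
  assume "j a b = Some b"
  then have "j b a = Some b" using pl_comm[OF assms] by (elim conjE) simp
  then have "m b a = Some a" using pl_dual[OF assms(1,3,2)] by blast
  then show "m a b = Some a" using pl_comm[OF assms] by (elim conjE) simp
qed

lemma Elem_in_C[simp]: "Elem a \<in> ext_carrier L j m \<longleftrightarrow> a \<in> L"
  by (auto simp: ext_carrier_def)
lemma Top_in_C: "Top \<in> ext_carrier L j m \<longleftrightarrow> \<not> op_total L j"
  by (auto simp: ext_carrier_def)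
lemma Bot_in_C: "Bot \<in> ext_carrier L j m \<longleftrightarrow> \<not> op_total L m"
  by (auto simp: ext_carrier_def)

lemma ext_le_refl: "partial_lattice L j m \<Longrightarrow> x \<in> ext_carrier L j m \<Longrightarrow> ext_le j x x"
proof (cases x)
  case (Elem a)
  assume "partial_lattice L j m" "x \<in> ext_carrier L j m"
  then show ?thesis using Elem pl_idem[of L j m a] by simp
qed simp_all

lemma ext_le_Top_left: "ext_le j Top w \<longleftrightarrow> w = Top"
  by (cases w) simp_all
lemma ext_le_Top_right[simp]: "ext_le j x Top"
  by (cases x) simp_all
lemma ext_le_Bot_right: "ext_le j w Bot \<longleftrightarrow> w = Bot"
  by (cases w) simp_all

lemma ext_le_antisym: assumes "partial_lattice L j m" "x \<in> ext_carrier L j m" "y \<in> ext_carrier L j m"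
  "ext_le j x y" "ext_le j y x" shows "x = y"
proof (cases x)
  case (Elem a)
  note xa = this
  show ?thesis
  proof (cases y)
    case (Elem b)
    have "a \<in> L" "b \<in> L" using assms xa Elem by auto
    then have "j a b = j b a" using pl_comm[OF assms(1)] by blast
    then show ?thesis using assms xa Elem by simp
  qed (use assms xa in auto)
qed (use assms in \<open>auto simp: ext_le_Top_left ext_le_Bot_right\<close>)

lemma sup_eqI: assumes pl: "partial_lattice L j m" and z: "z \<in> ext_carrier L j m"
  and "ext_le j x z" "ext_le j y z"
  and least: "\<And>w. w \<in> ext_carrier L j m \<Longrightarrow> ext_le j x w \<Longrightarrow> ext_le j y w \<Longrightarrow> ext_le j z w"
  shows "ext_sup L j m x y = z"
  unfolding ext_sup_def
proof (rule the_equality)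
  show "z \<in> ext_carrier L j m \<and> ext_le j x z \<and> ext_le j y z \<and>
      (\<forall>w\<in>ext_carrier L j m. ext_le j x w \<and> ext_le j y w \<longrightarrow> ext_le j z w)"
    using assms by blast
  fix z' assume "z' \<in> ext_carrier L j m \<and> ext_le j x z' \<and> ext_le j y z' \<and>
      (\<forall>w\<in>ext_carrier L j m. ext_le j x w \<and> ext_le j y w \<longrightarrow> ext_le j z' w)"
  then show "z' = z" using assms ext_le_antisym[OF pl] by blast
qed

lemma inf_eqI: assumes pl: "partial_lattice L j m" and z: "z \<in> ext_carrier L j m"
  and "ext_le j z x" "ext_le j z y"
  and least: "\<And>w. w \<in> ext_carrier L j m \<Longrightarrow> ext_le j w x \<Longrightarrow> ext_le j w y \<Longrightarrow> ext_le j w z"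
  shows "ext_inf L j m x y = z"
  unfolding ext_inf_def
proof (rule the_equality)
  show "z \<in> ext_carrier L j m \<and> ext_le j z x \<and> ext_le j z y \<and>
      (\<forall>w\<in>ext_carrier L j m. ext_le j w x \<and> ext_le j w y \<longrightarrow> ext_le j w z)"
    using assms by blast
  fix z' assume "z' \<in> ext_carrier L j m \<and> ext_le j z' x \<and> ext_le j z' y \<and>
      (\<forall>w\<in>ext_carrier L j m. ext_le j w x \<and> ext_le j w y \<longrightarrow> ext_le j w z')"
  then show "z' = z" using assms ext_le_antisym[OF pl] by blast
qed

lemma sup_Bot_left: "partial_lattice L j m \<Longrightarrow> x \<in> ext_carrier L j m \<Longrightarrow> ext_sup L j m Bot x = x"
  by (rule sup_eqI) (auto simp: ext_le_refl)
lemma sup_Bot_right: "partial_lattice L j m \<Longrightarrow> x \<in> ext_carrier L j m \<Longrightarrow> ext_sup L j m x Bot = x"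
  by (rule sup_eqI) (auto simp: ext_le_refl)
lemma sup_Top_left: "partial_lattice L j m \<Longrightarrow> Top \<in> ext_carrier L j m \<Longrightarrow> ext_sup L j m Top x = Top"
  by (rule sup_eqI) (auto simp: ext_le_Top_left)
lemma sup_Top_right: "partial_lattice L j m \<Longrightarrow> Top \<in> ext_carrier L j m \<Longrightarrow> ext_sup L j m x Top = Top"
  by (rule sup_eqI) (auto simp: ext_le_Top_left)
lemma inf_Top_left: "partial_lattice L j m \<Longrightarrow> x \<in> ext_carrier L j m \<Longrightarrow> ext_inf L j m Top x = x"
  by (rule inf_eqI) (auto simp: ext_le_refl)
lemma inf_Top_right: "partial_lattice L j m \<Longrightarrow> x \<in> ext_carrier L j m \<Longrightarrow> ext_inf L j m x Top = x"
  by (rule inf_eqI) (auto simp: ext_le_refl)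
lemma inf_Bot_left: "partial_lattice L j m \<Longrightarrow> Bot \<in> ext_carrier L j m \<Longrightarrow> ext_inf L j m Bot x = Bot"
  by (rule inf_eqI) (auto simp: ext_le_Bot_right)
lemma inf_Bot_right: "partial_lattice L j m \<Longrightarrow> Bot \<in> ext_carrier L j m \<Longrightarrow> ext_inf L j m x Bot = Bot"
  by (rule inf_eqI) (auto simp: ext_le_Bot_right)

lemma sup_Elem_Some: assumes pl: "partial_lattice L j m" and a: "a\<in>L" and b: "b\<in>L" and c: "j a b = Some c"
  shows "ext_sup L j m (Elem a) (Elem b) = Elem c"
proof (rule sup_eqI[OF pl])
  have cL: "c \<in> L" using pl_closed_j[OF pl a b c] .
  then show "Elem c \<in> ext_carrier L j m" by simp
  have "j a c = Some c" using pl_assoc_j[OF pl a a b] c pl_idem[OF pl a] by simp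
  then show "ext_le j (Elem a) (Elem c)" by simp
  have "j c b = Some c" using pl_assoc_j[OF pl a b b] c pl_idem[OF pl b] by simp
  then show "ext_le j (Elem b) (Elem c)" using pl_comm[OF pl b cL] by simp
  fix w assume w: "w \<in> ext_carrier L j m" "ext_le j (Elem a) w" "ext_le j (Elem b) w"
  show "ext_le j (Elem c) w"
  proof (cases w)
    case (Elem e)
    then have e: "e \<in> L" "j a e = Some e" "j b e = Some e" using w by auto
    have "j c e = Some e" using pl_assoc_j[OF pl a b e(1)] c e by simp
    then show ?thesis using Elem by simp
  qed (use w in auto)
qed

lemma sup_Elem_None: assumes pl: "partial_lattice L j m" and a: "a\<in>L" and b: "b\<in>L" and c: "j a b = None"
  shows "ext_sup L j m (Elem a) (Elem b) = Top"
proof (rule sup_eqI[OF pl])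
  show "Top \<in> ext_carrier L j m" using a b c by (auto simp: Top_in_C op_total_def)
  fix w assume w: "w \<in> ext_carrier L j m" "ext_le j (Elem a) w" "ext_le j (Elem b) w"
  show "ext_le j Top w"
  proof (cases w)
    case (Elem e)
    then have e: "e \<in> L" "j a e = Some e" "j b e = Some e" using w by auto
    have False using pl_assoc_j[OF pl a b e(1)] c e by simp
    then show ?thesis ..
  qed (use w in auto)
qed auto

lemma inf_Elem_Some: assumes pl: "partial_lattice L j m" and a: "a\<in>L" and b: "b\<in>L" and c: "m a b = Some c"
  shows "ext_inf L j m (Elem a) (Elem b) = Elem c"
proof (rule inf_eqI[OF pl])
  have cL: "c \<in> L" using pl_closed_m[OF pl a b c] .
  then show "Elem c \<in> ext_carrier L j m" by simp
  have "m c a = Some c" using pl_assoc_m[OF pl b a a] c pl_idem[OF pl a] pl_comm[OF pl a b] by simp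
  then show "ext_le j (Elem c) (Elem a)" using le_iff_m[OF pl cL a] by simp
  have "m c b = Some c" using pl_assoc_m[OF pl a b b] c pl_idem[OF pl b] by simp
  then show "ext_le j (Elem c) (Elem b)" using le_iff_m[OF pl cL b] by simp
  fix w assume w: "w \<in> ext_carrier L j m" "ext_le j w (Elem a)" "ext_le j w (Elem b)"
  show "ext_le j w (Elem c)"
  proof (cases w)
    case (Elem e)
    then have e: "e \<in> L" "j e a = Some a" "j e b = Some b" using w by auto
    then have e2: "m e a = Some e" "m e b = Some e" using le_iff_m[OF pl e(1) a] le_iff_m[OF pl e(1) b] by auto
    have "m e c = Some e" using pl_assoc_m[OF pl e(1) a b] c e2 by simp
    then show ?thesis using Elem le_iff_m[OF pl e(1) cL] by simp
  qed (use w in auto)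
qed

lemma inf_Elem_None: assumes pl: "partial_lattice L j m" and a: "a\<in>L" and b: "b\<in>L" and c: "m a b = None"
  shows "ext_inf L j m (Elem a) (Elem b) = Bot"
proof (rule inf_eqI[OF pl])
  show "Bot \<in> ext_carrier L j m" using a b c by (auto simp: Bot_in_C op_total_def)
  fix w assume w: "w \<in> ext_carrier L j m" "ext_le j w (Elem a)" "ext_le j w (Elem b)"
  show "ext_le j w Bot"
  proof (cases w)
    case (Elem e)
    then have e: "e \<in> L" "j e a = Some a" "j e b = Some b" using w by auto
    then have e2: "m e a = Some e" "m e b = Some e" using le_iff_m[OF pl e(1) a] le_iff_m[OF pl e(1) b] by auto
    have False using pl_assoc_m[OF pl e(1) a b] c e2 by simp
    then show ?thesis ..
  qed (use w in auto)
qed auto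

fun Fj :: "('b \<Rightarrow> 'b \<Rightarrow> 'b option) \<Rightarrow> 'b ext \<Rightarrow> 'b ext \<Rightarrow> 'b ext" where
  "Fj f Bot y = y"
| "Fj f Top y = Top"
| "Fj f (Elem u) Bot = Elem u"
| "Fj f (Elem u) Top = Top"
| "Fj f (Elem u) (Elem v) = (case f u v of Some w \<Rightarrow> Elem w | None \<Rightarrow> Top)"

fun Gm :: "('b \<Rightarrow> 'b \<Rightarrow> 'b option) \<Rightarrow> 'b ext \<Rightarrow> 'b ext \<Rightarrow> 'b ext" where
  "Gm f Top y = y"
| "Gm f Bot y = Bot"
| "Gm f (Elem u) Top = Elem u"
| "Gm f (Elem u) Bot = Bot"
| "Gm f (Elem u) (Elem v) = (case f u v of Some w \<Rightarrow> Elem w | None \<Rightarrow> Bot)"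

lemma H_sup:
  assumes pl: "partial_lattice L1 j1 m1" and hh: "closed_phom L1 j1 m1 L2 j2 m2 h"
    and a: "a \<in> ext_carrier L1 j1 m1" and c: "c \<in> ext_carrier L1 j1 m1"
  shows "ext_sup L1 j1 m1 a c \<in> ext_carrier L1 j1 m1 \<and>
         map_ext h (ext_sup L1 j1 m1 a c) = Fj j2 (map_ext h a) (map_ext h c)"
proof (cases a)
  case (Elem x)
  note ax = this
  show ?thesis
  proof (cases c)
    case (Elem y)
    have x: "x \<in> L1" and y: "y \<in> L1" using a c ax Elem by auto
    show ?thesis
    proof (cases "j1 x y")
      case None
      then have "j2 (h x) (h y) = None" using hh x y unfolding closed_phom_def by blast
      moreover have "Top \<in> ext_carrier L1 j1 m1" using None x y by (auto simp: Top_in_C op_total_def)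
      ultimately show ?thesis using sup_Elem_None[OF pl x y None] ax Elem by simp
    next
      case (Some w)
      then have "j2 (h x) (h y) = Some (h w)" using hh x y unfolding closed_phom_def phom_def by blast
      moreover have "w \<in> L1" using pl_closed_j[OF pl x y Some] .
      ultimately show ?thesis using sup_Elem_Some[OF pl x y Some] ax Elem by simp
    qed
  next
    case Bot
    then show ?thesis using ax a c pl by (simp add: sup_Bot_right sup_Top_right)
  next
    case Top
    then show ?thesis using ax a c pl by (simp add: sup_Bot_right sup_Top_right)
  qed
next
  case Bot
  then show ?thesis using a c pl by (simp add: sup_Bot_left sup_Top_left)
next
  case Top
  then show ?thesis using a c pl by (simp add: sup_Bot_left sup_Top_left)
qed

lemma H_inf:
  assumes pl: "partial_lattice L1 j1 m1" and hh: "closed_phom L1 j1 m1 L2 j2 m2 h"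
    and a: "a \<in> ext_carrier L1 j1 m1" and c: "c \<in> ext_carrier L1 j1 m1"
  shows "ext_inf L1 j1 m1 a c \<in> ext_carrier L1 j1 m1 \<and>
         map_ext h (ext_inf L1 j1 m1 a c) = Gm m2 (map_ext h a) (map_ext h c)"
proof (cases a)
  case (Elem x)
  note ax = this
  show ?thesis
  proof (cases c)
    case (Elem y)
    have x: "x \<in> L1" and y: "y \<in> L1" using a c ax Elem by auto
    show ?thesis
    proof (cases "m1 x y")
      case None
      then have "m2 (h x) (h y) = None" using hh x y unfolding closed_phom_def by blast
      moreover have "Bot \<in> ext_carrier L1 j1 m1" using None x y by (auto simp: Bot_in_C op_total_def)
      ultimately show ?thesis using inf_Elem_None[OF pl x y None] ax Elem by simp
    next
      case (Some w)
      then have "m2 (h x) (h y) = Some (h w)" using hh x y unfolding closed_phom_def phom_def by blast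
      moreover have "w \<in> L1" using pl_closed_m[OF pl x y Some] .
      ultimately show ?thesis using inf_Elem_Some[OF pl x y Some] ax Elem by simp
    qed
  next
    case Bot
    then show ?thesis using ax a c pl by (simp add: inf_Bot_right inf_Top_right)
  next
    case Top
    then show ?thesis using ax a c pl by (simp add: inf_Bot_right inf_Top_right)
  qed
next
  case Bot
  then show ?thesis using a c pl by (simp add: inf_Bot_left inf_Top_left)
next
  case Top
  then show ?thesis using a c pl by (simp add: inf_Bot_left inf_Top_left)
qed

definition thetaH where
  "thetaH L j m h = {(x, y). x \<in> ext_carrier L j m \<and> y \<in> ext_carrier L j m \<and> map_ext h x = map_ext h y}"

lemma thetaH_cong:
  assumes pl: "partial_lattice L1 j1 m1" and hh: "closed_phom L1 j1 m1 L2 j2 m2 h"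
  shows "ext_lattice_cong L1 j1 m1 (thetaH L1 j1 m1 h)"
  unfolding ext_lattice_cong_def
proof (intro conjI allI impI)
  show "equiv (ext_carrier L1 j1 m1) (thetaH L1 j1 m1 h)"
    unfolding equiv_def refl_on_def sym_def trans_def thetaH_def by auto
  fix a b c d assume ab: "(a, b) \<in> thetaH L1 j1 m1 h \<and> (c, d) \<in> thetaH L1 j1 m1 h"
  then have C: "a \<in> ext_carrier L1 j1 m1" "b \<in> ext_carrier L1 j1 m1"
     "c \<in> ext_carrier L1 j1 m1" "d \<in> ext_carrier L1 j1 m1"
     and e: "map_ext h a = map_ext h b" "map_ext h c = map_ext h d" by (auto simp: thetaH_def)
  show "(ext_sup L1 j1 m1 a c, ext_sup L1 j1 m1 b d) \<in> thetaH L1 j1 m1 h"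
    using H_sup[OF pl hh C(1,3)] H_sup[OF pl hh C(2,4)] e by (simp add: thetaH_def)
  show "(ext_inf L1 j1 m1 a c, ext_inf L1 j1 m1 b d) \<in> thetaH L1 j1 m1 h"
    using H_inf[OF pl hh C(1,3)] H_inf[OF pl hh C(2,4)] e by (simp add: thetaH_def)
qed

lemma Theta_sub:
  assumes pl: "partial_lattice L1 j1 m1" and hh: "closed_phom L1 j1 m1 L2 j2 m2 h"
  shows "Theta L1 j1 m1 (ker L1 h) \<subseteq> thetaH L1 j1 m1 h"
proof -
  have "lift_rel (ker L1 h) \<subseteq> thetaH L1 j1 m1 h"
    by (auto simp: lift_rel_def ker_def thetaH_def)
  then show ?thesis unfolding Theta_def using thetaH_cong[OF pl hh] by blast
qed

lemma Theta_sup: "lift_rel E \<subseteq> Theta L j m E"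
  unfolding Theta_def by blast

lemma Theta_Elem:
  assumes pl: "partial_lattice L1 j1 m1" and hh: "closed_phom L1 j1 m1 L2 j2 m2 h"
  shows "(Elem x, Elem y) \<in> Theta L1 j1 m1 (ker L1 h) \<longleftrightarrow> (x, y) \<in> ker L1 h"
proof
  assume "(Elem x, Elem y) \<in> Theta L1 j1 m1 (ker L1 h)"
  then show "(x, y) \<in> ker L1 h" using Theta_sub[OF pl hh] by (auto simp: thetaH_def ker_def)
next
  assume "(x, y) \<in> ker L1 h"
  then show "(Elem x, Elem y) \<in> Theta L1 j1 m1 (ker L1 h)" using Theta_sup[of "ker L1 h" L1 j1 m1]
    by (auto simp: lift_rel_def)
qed

lemma Theta_Elem_Top:
  assumes pl: "partial_lattice L1 j1 m1" and hh: "closed_phom L1 j1 m1 L2 j2 m2 h"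
  shows "(Elem x, Top) \<notin> Theta L1 j1 m1 (ker L1 h)" "(Elem x, Bot) \<notin> Theta L1 j1 m1 (ker L1 h)"
  using Theta_sub[OF pl hh] by (auto simp: thetaH_def)

lemma ker_Image: "x \<in> L \<Longrightarrow> ker L h `` {x} = {z \<in> L. h z = h x}"
  by (auto simp: ker_def)


lemma img_closed:
  assumes pl: "partial_lattice L1 j1 m1" and hh: "closed_phom L1 j1 m1 L2 j2 m2 h"
    and x: "x \<in> L1" and y: "y \<in> L1"
  shows "j2 (h x) (h y) = Some c \<Longrightarrow> c \<in> h ` L1" and "m2 (h x) (h y) = Some c \<Longrightarrow> c \<in> h ` L1"
proof -
  assume c: "j2 (h x) (h y) = Some c"
  then have "j1 x y \<noteq> None" using hh x y unfolding closed_phom_def by blast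
  then obtain w where w: "j1 x y = Some w" by blast
  then have "j2 (h x) (h y) = Some (h w)" using hh x y unfolding closed_phom_def phom_def by blast
  moreover have "w \<in> L1" using pl_closed_j[OF pl x y w] .
  ultimately show "c \<in> h ` L1" using c by auto
next
  assume c: "m2 (h x) (h y) = Some c"
  then have "m1 x y \<noteq> None" using hh x y unfolding closed_phom_def by blast
  then obtain w where w: "m1 x y = Some w" by blast
  then have "m2 (h x) (h y) = Some (h w)" using hh x y unfolding closed_phom_def phom_def by blast
  moreover have "w \<in> L1" using pl_closed_m[OF pl x y w] .
  ultimately show "c \<in> h ` L1" using c by auto
qed

lemma img_pl:
  assumes pl: "partial_lattice L1 j1 m1" and pl2: "partial_lattice L2 j2 m2"
    and hh: "closed_phom L1 j1 m1 L2 j2 m2 h"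
  shows "partial_lattice (h ` L1) j2 m2"
proof -
  have sub: "h ` L1 \<subseteq> L2" using hh unfolding closed_phom_def phom_def by blast
  show ?thesis unfolding partial_lattice_def
  proof (intro conjI ballI allI)
    fix a b c assume a: "a \<in> h ` L1" and b: "b \<in> h ` L1"
    then obtain x y where x: "x \<in> L1" "a = h x" and y: "y \<in> L1" "b = h y" by blast
    show "j2 a b = Some c \<longrightarrow> c \<in> h ` L1" using img_closed(1)[OF pl hh x(1) y(1)] x y by blast
    show "m2 a b = Some c \<longrightarrow> c \<in> h ` L1" using img_closed(2)[OF pl hh x(1) y(1)] x y by blast
  next
    fix a assume "a \<in> h ` L1" then have "a \<in> L2" using sub by blast
    then show "j2 a a = Some a" "m2 a a = Some a" using pl_idem[OF pl2] by blast+
  next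
    fix a b assume "a \<in> h ` L1" "b \<in> h ` L1" then have ab: "a \<in> L2" "b \<in> L2" using sub by blast+
    show "j2 a b = j2 b a" using pl_comm[OF pl2 ab] by (rule conjunct1)
    show "m2 a b = m2 b a" using pl_comm[OF pl2 ab] by (rule conjunct2)
    show "j2 a b = Some a \<longrightarrow> m2 a b = Some b" using pl_dual[OF pl2 ab] by (rule conjunct1)
    show "m2 a b = Some a \<longrightarrow> j2 a b = Some b" using pl_dual[OF pl2 ab] by (rule conjunct2)
  next
    fix a b c assume "a \<in> h ` L1" "b \<in> h ` L1" "c \<in> h ` L1"
    then have abc: "a \<in> L2" "b \<in> L2" "c \<in> L2" using sub by blast+
    show "Option.bind (j2 a b) (\<lambda>d. j2 d c) = Option.bind (j2 b c) (\<lambda>d. j2 a d)"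
      by (rule pl_assoc_j[OF pl2 abc])
    show "Option.bind (m2 a b) (\<lambda>d. m2 d c) = Option.bind (m2 b c) (\<lambda>d. m2 a d)"
      by (rule pl_assoc_m[OF pl2 abc])
  qed
qed

lemma some_class:
  assumes x: "x \<in> L1"
  shows "(SOME z. z \<in> ker L1 h `` {x}) \<in> L1 \<and> h (SOME z. z \<in> ker L1 h `` {x}) = h x"
proof -
  have "x \<in> ker L1 h `` {x}" using x by (auto simp: ker_def)
  then have "(SOME z. z \<in> ker L1 h `` {x}) \<in> ker L1 h `` {x}" by (rule someI)
  then show ?thesis by (auto simp: ker_def)
qed

lemma qj_lemma:
  assumes pl: "partial_lattice L1 j1 m1" and hh: "closed_phom L1 j1 m1 L2 j2 m2 h"
    and x: "x \<in> L1" and y: "y \<in> L1"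
  shows "(j2 (h x) (h y) = None \<and> quot_join L1 j1 m1 (ker L1 h) (ker L1 h `` {x}) (ker L1 h `` {y}) = None) \<or>
         (\<exists>w\<in>L1. j2 (h x) (h y) = Some (h w) \<and> quot_join L1 j1 m1 (ker L1 h) (ker L1 h `` {x}) (ker L1 h `` {y}) = Some (ker L1 h `` {w}))"
proof -
  define x' where "x' = (SOME z. z \<in> ker L1 h `` {x})"
  define y' where "y' = (SOME z. z \<in> ker L1 h `` {y})"
  have x': "x' \<in> L1" "h x' = h x" using some_class[OF x] unfolding x'_def by auto
  have y': "y' \<in> L1" "h y' = h y" using some_class[OF y] unfolding y'_def by auto
  define S where "S = {z \<in> L1. (Elem z, ext_sup L1 j1 m1 (Elem x') (Elem y')) \<in> Theta L1 j1 m1 (ker L1 h)}"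
  have q: "quot_join L1 j1 m1 (ker L1 h) (ker L1 h `` {x}) (ker L1 h `` {y}) = (if S = {} then None else Some S)"
    unfolding quot_join_def Let_def S_def x'_def y'_def by simp
  show ?thesis
  proof (cases "j1 x' y'")
    case None
    have "S = {}" unfolding S_def using sup_Elem_None[OF pl x'(1) y'(1) None] Theta_Elem_Top[OF pl hh] by simp
    moreover have "j2 (h x) (h y) = None" using None hh x'(1) y'(1) x'(2) y'(2) unfolding closed_phom_def by metis
    ultimately show ?thesis using q by simp
  next
    case (Some w)
    have wL: "w \<in> L1" using pl_closed_j[OF pl x'(1) y'(1) Some] .
    have "S = {z \<in> L1. (z, w) \<in> ker L1 h}" unfolding S_def using sup_Elem_Some[OF pl x'(1) y'(1) Some] Theta_Elem[OF pl hh] by simp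
    also have "\<dots> = ker L1 h `` {w}" using wL by (auto simp: ker_def)
    finally have S: "S = ker L1 h `` {w}" .
    have "S \<noteq> {}" using S wL by (auto simp: ker_def)
    moreover have "j2 (h x) (h y) = Some (h w)" using Some hh x'(1) y'(1) x'(2) y'(2) unfolding closed_phom_def phom_def by metis
    ultimately show ?thesis using q S wL by auto
  qed
qed

lemma qm_lemma:
  assumes pl: "partial_lattice L1 j1 m1" and hh: "closed_phom L1 j1 m1 L2 j2 m2 h"
    and x: "x \<in> L1" and y: "y \<in> L1"
  shows "(m2 (h x) (h y) = None \<and> quot_meet L1 j1 m1 (ker L1 h) (ker L1 h `` {x}) (ker L1 h `` {y}) = None) \<or>
         (\<exists>w\<in>L1. m2 (h x) (h y) = Some (h w) \<and> quot_meet L1 j1 m1 (ker L1 h) (ker L1 h `` {x}) (ker L1 h `` {y}) = Some (ker L1 h `` {w}))"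
proof -
  define x' where "x' = (SOME z. z \<in> ker L1 h `` {x})"
  define y' where "y' = (SOME z. z \<in> ker L1 h `` {y})"
  have x': "x' \<in> L1" "h x' = h x" using some_class[OF x] unfolding x'_def by auto
  have y': "y' \<in> L1" "h y' = h y" using some_class[OF y] unfolding y'_def by auto
  define S where "S = {z \<in> L1. (Elem z, ext_inf L1 j1 m1 (Elem x') (Elem y')) \<in> Theta L1 j1 m1 (ker L1 h)}"
  have q: "quot_meet L1 j1 m1 (ker L1 h) (ker L1 h `` {x}) (ker L1 h `` {y}) = (if S = {} then None else Some S)"
    unfolding quot_meet_def Let_def S_def x'_def y'_def by simp
  show ?thesis
  proof (cases "m1 x' y'")
    case None
    have "S = {}" unfolding S_def using inf_Elem_None[OF pl x'(1) y'(1) None] Theta_Elem_Top[OF pl hh] by simp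
    moreover have "m2 (h x) (h y) = None" using None hh x'(1) y'(1) x'(2) y'(2) unfolding closed_phom_def by metis
    ultimately show ?thesis using q by simp
  next
    case (Some w)
    have wL: "w \<in> L1" using pl_closed_m[OF pl x'(1) y'(1) Some] .
    have "S = {z \<in> L1. (z, w) \<in> ker L1 h}" unfolding S_def using inf_Elem_Some[OF pl x'(1) y'(1) Some] Theta_Elem[OF pl hh] by simp
    also have "\<dots> = ker L1 h `` {w}" using wL by (auto simp: ker_def)
    finally have S: "S = ker L1 h `` {w}" .
    have "S \<noteq> {}" using S wL by (auto simp: ker_def)
    moreover have "m2 (h x) (h y) = Some (h w)" using Some hh x'(1) y'(1) x'(2) y'(2) unfolding closed_phom_def phom_def by metis
    ultimately show ?thesis using q S wL by auto
  qed
qed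

theorem mainTheorem8:
  fixes L1 :: "'a set" and j1 m1 :: "'a \<Rightarrow> 'a \<Rightarrow> 'a option"
    and L2 :: "'b set" and j2 m2 :: "'b \<Rightarrow> 'b \<Rightarrow> 'b option"
    and h :: "'a \<Rightarrow> 'b"
  assumes "partial_lattice L1 j1 m1"
    and "partial_lattice L2 j2 m2"
    and "closed_phom L1 j1 m1 L2 j2 m2 h"
  shows "ker L1 h \<in> Con L1 j1 m1 \<and>
    ((Bot \<in> ext_carrier L1 j1 m1 \<longrightarrow> Theta L1 j1 m1 (ker L1 h) `` {Bot} = {Bot}) \<and>
     (Top \<in> ext_carrier L1 j1 m1 \<longrightarrow> Theta L1 j1 m1 (ker L1 h) `` {Top} = {Top}) \<longrightarrow>
       partial_lattice (h ` L1) j2 m2 \<and>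
       (\<exists>\<phi>. (\<forall>x\<in>L1. \<phi> (h x) = ker L1 h `` {x}) \<and>
            piso (h ` L1) j2 m2 (L1 // ker L1 h)
                 (quot_join L1 j1 m1 (ker L1 h)) (quot_meet L1 j1 m1 (ker L1 h)) \<phi>))"
proof -
  note pl = assms(1) and pl2 = assms(2) and hh = assms(3)
  let ?K = "ker L1 h"
  have kerEq: "{(x, y). (Elem x, Elem y) \<in> Theta L1 j1 m1 ?K} = ?K"
    using Theta_Elem[OF pl hh] by auto
  have eqv: "equiv L1 ?K" unfolding equiv_def refl_on_def sym_def trans_def ker_def by auto
  have con: "?K \<in> Con L1 j1 m1" unfolding Con_def using kerEq eqv by auto
  define \<phi> where "\<phi> b = ?K `` {SOME x. x \<in> L1 \<and> h x = b}" for b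
  have phi: "\<forall>x\<in>L1. \<phi> (h x) = ?K `` {x}"
  proof
    fix x assume x: "x \<in> L1"
    have "\<exists>z. z \<in> L1 \<and> h z = h x" using x by blast
    then have s: "(SOME z. z \<in> L1 \<and> h z = h x) \<in> L1 \<and> h (SOME z. z \<in> L1 \<and> h z = h x) = h x"
      by (rule someI_ex)
    show "\<phi> (h x) = ?K `` {x}" unfolding \<phi>_def using s x by (auto simp: ker_def)
  qed
  have piso: "piso (h ` L1) j2 m2 (L1 // ?K) (quot_join L1 j1 m1 ?K) (quot_meet L1 j1 m1 ?K) \<phi>"
    unfolding piso_def closed_phom_def phom_def
  proof (intro conjI ballI allI impI)
    fix a assume "a \<in> h ` L1"
    then obtain x where x: "x \<in> L1" "a = h x" by blast
    show "\<phi> a \<in> L1 // ?K" using phi x by (auto intro: quotientI)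
  next
    fix a b c assume a: "a \<in> h ` L1" and b: "b \<in> h ` L1"
    then obtain x y where x: "x \<in> L1" "a = h x" and y: "y \<in> L1" "b = h y" by blast
    {
      assume "j2 a b = Some c"
      then show "quot_join L1 j1 m1 ?K (\<phi> a) (\<phi> b) = Some (\<phi> c)"
        using qj_lemma[OF pl hh x(1) y(1)] x y phi by auto
    next
      assume "m2 a b = Some c"
      then show "quot_meet L1 j1 m1 ?K (\<phi> a) (\<phi> b) = Some (\<phi> c)"
        using qm_lemma[OF pl hh x(1) y(1)] x y phi by auto
    }
  next
    fix a b assume a: "a \<in> h ` L1" and b: "b \<in> h ` L1"
    then obtain x y where x: "x \<in> L1" "a = h x" and y: "y \<in> L1" "b = h y" by blast
    {
      assume "quot_join L1 j1 m1 ?K (\<phi> a) (\<phi> b) \<noteq> None"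
      then show "j2 a b \<noteq> None" using qj_lemma[OF pl hh x(1) y(1)] x y phi by auto
    next
      assume "quot_meet L1 j1 m1 ?K (\<phi> a) (\<phi> b) \<noteq> None"
      then show "m2 a b \<noteq> None" using qm_lemma[OF pl hh x(1) y(1)] x y phi by auto
    }
  next
    show "bij_betw \<phi> (h ` L1) (L1 // ?K)"
      unfolding bij_betw_def
    proof
      show "inj_on \<phi> (h ` L1)"
      proof (rule inj_onI)
        fix a b assume "a \<in> h ` L1" "b \<in> h ` L1" and e: "\<phi> a = \<phi> b"
        then obtain x y where x: "x \<in> L1" "a = h x" and y: "y \<in> L1" "b = h y" by blast
        have "?K `` {x} = ?K `` {y}" using e phi x y by simp
        then have "x \<in> ?K `` {y}" using x by (auto simp: ker_def)
        then show "a = b" using x y by (auto simp: ker_def)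
      qed
      show "\<phi> ` h ` L1 = L1 // ?K"
        unfolding quotient_def using phi by auto
    qed
  qed
  show ?thesis using con img_pl[OF pl pl2 hh] piso phi by blast
qed

end
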